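(* Let $s\ge2$ groups of positive integer moduli be given: Group $j$ ($1\le j\le s$) consists of $L_j\ge1$ moduli $0<M_{j,1}<\dots<M_{j,L_j}$; put $\delta_j=\operatorname{lcm}(M_{j,1},\dots,M_{j,L_j})$ and assume $\delta_1,\dots,\delta_s$ pairwise distinct. Let $N$ be an integer with $0\le N<\operatorname{lcm}(\delta_1,\dots,\delta_s)$, let $r_{j,i}$ be the remainder of $N$ modulo $M_{j,i}$ and $n_{j,i}=(N-r_{j,i})/M_{j,i}$. Let $G_j=\max_{1\le i\le L_j}\min_{q\ne i}\gcd(M_{j,i},M_{j,q})/4$ if $L_j\ge2$, $G_j=M_{j,1}/4$ if $L_j=1$, and let $k$ be an index with $$G:=\min_{q\ne k}\frac{\gcd(\delta_k,\delta_q)}{4}=\max_{1\le i\le s}\min_{q\ne i}\frac{\gcd(\delta_i,\delta_q)}{4}.$$ Let $\tilde r_{j,i}$ be integers with $0\le\tilde r_{j,i}\le M_{j,i}-1$ and $|\tilde r_{j,i}-r_{j,i}|\le\tau_j$, where $$\tau_k<\min(G_k,G),\qquad \tau_j<\min\Big(G_j,\ \frac{\gcd(\delta_j,\delta_k)}{2}-\min(G_k,G)\Big)\ \ (j\ne k).$$ Then the two-stage algorithm (described in the context) with stage-2 reference index $k$ outputs $\hat n_{j,i}=n_{j,i}$ for all $1\le i\le L_j$, $1\le j\le s$.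
   Context: For $x\in\mathbb R$, $[x]$ denotes the unique integer with $-1/2\le x-[x]<1/2$. Single-stage algorithm $\mathcal A$: for pairwise distinct positive integers $P_1,\dots,P_m$ ($m\ge2$), a reference index $k$ and integers $x_1,\dots,x_m$: for $i\ne k$ put $m_{ki}=\gcd(P_k,P_i)$, $\Gamma_{ki}=P_k/m_{ki}$, $\Gamma_{ik}=P_i/m_{ki}$, $\hat q_{ik}=[(x_i-x_k)/m_{ki}]$, let $\bar\Gamma_{ki}$ be an inverse of $\Gamma_{ki}$ modulo $\Gamma_{ik}$ and $\hat\xi_{ik}\equiv\hat q_{ik}\bar\Gamma_{ki}\pmod{\Gamma_{ik}}$, $0\le\hat\xi_{ik}<\Gamma_{ik}$; let $\hat n_k$ be the least nonnegative $y$ with $y\equiv\hat\xi_{ik}\pmod{\Gamma_{ik}}$ for all $i\ne k$ (the algorithm fails if none exists), and $\hat n_i=(\hat n_k\Gamma_{ki}-\hat q_{ik})/\Gamma_{ik}$ for $i\ne k$. Two-stage algorithm with stage-2 reference index $k$: Stage 1: for each group $j$, if $L_j\ge2$ apply $\mathcal A$ to $M_{j,1},\dots,M_{j,L_j}$ with inputs $\tilde r_{j,1},\dots,\tilde r_{j,L_j}$ and a reference index attaining $\max_i\min_{q\ne i}\gcd(M_{j,i},M_{j,q})$, obtaining $\hat K_{j,1},\dots,\hat K_{j,L_j}$; if $L_j=1$ set $\hat K_{j,1}=0$. Put $\hat N_j=[\frac1{L_j}\sum_{i=1}^{L_j}(\hat K_{j,i}M_{j,i}+\tilde r_{j,i})]$.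 Stage 2: apply $\mathcal A$ to $\delta_1,\dots,\delta_s$ with inputs $\hat N_1,\dots,\hat N_s$ and reference index $k$, obtaining $\hat l_1,\dots,\hat l_s$. Output $\hat n_{j,i}=\hat l_j\delta_j/M_{j,i}+\hat K_{j,i}$. *)

theory Defs
  imports "HOL-Number_Theory.Number_Theory"
begin

definition rnd :: "real \<Rightarrow> int" where
  "rnd x = \<lfloor>x + 1/2\<rfloor>"

text \<open>Single-stage algorithm A. Indices are 0-based: moduli P 0, ..., P (m-1),
  inputs x 0, ..., x (m-1), reference index k. Returns None on failure
  (no solution of the congruence system).\<close>
definition algA :: "(nat \<Rightarrow> int) \<Rightarrow> (nat \<Rightarrow> int) \<Rightarrow> nat \<Rightarrow> nat \<Rightarrow> (nat \<Rightarrow> int) option" where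
  "algA P x m k =
    (let mk = (\<lambda>i. gcd (P k) (P i));
         Gki = (\<lambda>i. P k div mk i);
         Gik = (\<lambda>i. P i div mk i);
         q = (\<lambda>i. rnd (real_of_int (x i - x k) / real_of_int (mk i)));
         ginv = (\<lambda>i. SOME g. [Gki i * g = 1] (mod Gik i));
         xi = (\<lambda>i. (q i * ginv i) mod Gik i);
         ok = (\<lambda>y::nat. \<forall>i<m. i \<noteq> k \<longrightarrow> [int y = xi i] (mod Gik i))
     in if \<exists>y. ok y then
          (let nk = int (LEAST y. ok y)
           in Some (\<lambda>i. if i = k then nk else (nk * Gki i - q i) div Gik i))
        else None)"

definition delta :: "(nat \<Rightarrow> nat \<Rightarrow> int) \<Rightarrow> (nat \<Rightarrow> nat) \<Rightarrow> nat \<Rightarrow> int" where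
  "delta M L j = Lcm (M j ` {..<L j})"

text \<open>Two-stage algorithm. Groups j < s, group j has moduli M j 0 < ... < M j (L j - 1),
  inputs rt j i; ref j is the stage-1 reference index of group j; k is the stage-2 reference.\<close>
definition twostage :: "nat \<Rightarrow> (nat \<Rightarrow> nat) \<Rightarrow> (nat \<Rightarrow> nat \<Rightarrow> int) \<Rightarrow> (nat \<Rightarrow> nat \<Rightarrow> int)
      \<Rightarrow> (nat \<Rightarrow> nat) \<Rightarrow> nat \<Rightarrow> (nat \<Rightarrow> nat \<Rightarrow> int) option" where
  "twostage s L M rt ref k =
    (let stage1 = (\<lambda>j. if 2 \<le> L j then algA (M j) (rt j) (L j) (ref j) else Some (\<lambda>i. 0))
     in if \<forall>j<s. stage1 j \<noteq> None then
          (let K = (\<lambda>j. the (stage1 j));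
               Nh = (\<lambda>j. rnd ((\<Sum>i<L j. real_of_int (K j i * M j i + rt j i)) / real (L j)))
           in (case algA (delta M L) Nh s k of
                 None \<Rightarrow> None
               | Some l \<Rightarrow> Some (\<lambda>j i. l j * (delta M L j div M j i) + K j i)))
        else None)"

definition mingcd :: "(nat \<Rightarrow> int) \<Rightarrow> nat \<Rightarrow> nat \<Rightarrow> int" where
  "mingcd P m i = (MIN q\<in>{..<m} - {i}. gcd (P i) (P q))"

definition maxmingcd :: "(nat \<Rightarrow> int) \<Rightarrow> nat \<Rightarrow> int" where
  "maxmingcd P m = (MAX i\<in>{..<m}. mingcd P m i)"

definition Gj :: "(nat \<Rightarrow> nat) \<Rightarrow> (nat \<Rightarrow> nat \<Rightarrow> int) \<Rightarrow> nat \<Rightarrow> real" where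
  "Gj L M j = (if 2 \<le> L j then real_of_int (maxmingcd (M j) (L j)) / 4
               else real_of_int (M j 0) / 4)"

end

theory Submission
  imports Defs
begin
lemma rnd_exact:
  fixes m a d :: int
  assumes "0 < m" "2 * \<bar>d\<bar> < m"
  shows "rnd (real_of_int (m*a + d) / real_of_int m) = a"
proof -
  have e: "real_of_int (m*a + d) / real_of_int m + 1/2 = real_of_int a + (real_of_int d / real_of_int m + 1/2)"
    using assms by (simp add: field_simps)
  have "2 * \<bar>real_of_int d\<bar> < real_of_int m" using assms(2) by linarith
  then have "-1/2 < real_of_int d / real_of_int m \<and> real_of_int d / real_of_int m < 1/2"
    using assms(1) by (auto simp: field_simps abs_less_iff)
  then have "0 \<le> real_of_int d / real_of_int m + 1/2 \<and> real_of_int d / real_of_int m + 1/2 < 1" by linarith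
  then show ?thesis unfolding rnd_def e by (simp only: floor_eq_iff) linarith
qed

lemma algA_correct:
  fixes P x e :: "nat \<Rightarrow> int" and X :: int
  assumes km: "k < m" and Ppos: "\<forall>i<m. 0 < P i" and X0: "0 \<le> X"
    and XD: "X < Lcm (P ` {..<m})"
    and xe: "\<forall>i<m. x i = X mod P i + e i"
    and err: "\<forall>i<m. i \<noteq> k \<longrightarrow> 2 * \<bar>e i - e k\<bar> < gcd (P k) (P i)"
  shows "\<exists>f. algA P x m k = Some f \<and> (\<forall>i<m. f i = X div P i)"
proof -
  define D where "D = Lcm (P ` {..<m})"
  define mk where "mk = (\<lambda>i. gcd (P k) (P i))"
  define Gki where "Gki = (\<lambda>i. P k div mk i)"
  define Gik where "Gik = (\<lambda>i. P i div mk i)"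
  define q where "q = (\<lambda>i. rnd (real_of_int (x i - x k) / real_of_int (mk i)))"
  define ginv where "ginv = (\<lambda>i. SOME g. [Gki i * g = 1] (mod Gik i))"
  define xi where "xi = (\<lambda>i. (q i * ginv i) mod Gik i)"
  define ok where "ok = (\<lambda>y::nat. \<forall>i<m. i \<noteq> k \<longrightarrow> [int y = xi i] (mod Gik i))"
  define n where "n = (\<lambda>i. X div P i)"
  have alg: "algA P x m k = (if \<exists>y. ok y then
          Some (\<lambda>i. if i = k then int (LEAST y. ok y) else (int (LEAST y. ok y) * Gki i - q i) div Gik i)
        else None)"
    unfolding algA_def Let_def ok_def xi_def ginv_def q_def Gik_def Gki_def mk_def by simp
  have Pk: "0 < P k" using Ppos km by auto
  have mkpos: "0 < mk i" if "i < m" for i using Pk unfolding mk_def by simp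
  have Gki_eq: "Gki i * mk i = P k" for i unfolding Gki_def mk_def by simp
  have Gik_eq: "Gik i * mk i = P i" for i unfolding Gik_def mk_def by simp
  have Gikpos: "0 < Gik i" if "i < m" for i
    using Gik_eq[of i] mkpos[OF that] Ppos that by (metis pos_imp_zdiv_pos_iff zero_less_mult_pos2 )
  have cop: "coprime (Gki i) (Gik i)" for i
    unfolding Gki_def Gik_def mk_def using Pk by (intro div_gcd_coprime) auto
  have q_eq: "q i = n k * Gki i - n i * Gik i" if "i < m" "i \<noteq> k" for i
  proof -
    have "x i - x k = mk i * (n k * Gki i - n i * Gik i) + (e i - e k)"
    proof -
      have "x i - x k = (X mod P i - X mod P k) + (e i - e k)" using xe that km by simp
      also have "X mod P i - X mod P k = P k * n k - P i * n i"
        unfolding n_def by (simp add: minus_div_mult_eq_mod[symmetric] algebra_simps)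
      also have "\<dots> = mk i * (n k * Gki i - n i * Gik i)"
        by (simp only: Gki_eq[of i, symmetric] Gik_eq[of i, symmetric]) (simp add: algebra_simps)
      finally show ?thesis .
    qed
    moreover have "2 * \<bar>e i - e k\<bar> < mk i" using err that unfolding mk_def by auto
    ultimately show ?thesis unfolding q_def using rnd_exact[OF mkpos[OF that(1)]] by presburger
  qed
  have ginv: "[Gki i * ginv i = 1] (mod Gik i)" for i
    unfolding ginv_def by (rule someI_ex) (rule cong_solve_coprime_int[OF cop])
  have xi_cong: "[xi i = n k] (mod Gik i)" if "i < m" "i \<noteq> k" for i
  proof -
    have "[xi i = q i * ginv i] (mod Gik i)" unfolding xi_def by (simp add: cong_def)
    also have "q i * ginv i = n k * (Gki i * ginv i) - n i * ginv i * Gik i"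
      unfolding q_eq[OF that] by (simp add: algebra_simps)
    also have "[\<dots> = n k * 1 - 0] (mod Gik i)"
      by (intro cong_diff cong_mult cong_refl ginv) (simp add: cong_def)
    finally show ?thesis by simp
  qed
  have ok_iff: "ok y \<longleftrightarrow> D dvd P k * (int y - n k)" for y
  proof -
    have "ok y \<longleftrightarrow> (\<forall>i<m. i \<noteq> k \<longrightarrow> Gik i dvd (int y - n k))"
      unfolding ok_def using xi_cong
      by (metis (no_types, lifting) cong_iff_dvd_diff cong_sym cong_trans)
    also have "\<dots> \<longleftrightarrow> (\<forall>i<m. P i dvd P k * (int y - n k))"
    proof -
      have "Gik i dvd z \<longleftrightarrow> P i dvd P k * z" if "i < m" for i z
      proof -
        have "Gik i dvd z \<longleftrightarrow> Gik i dvd Gki i * z"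
          using cop[of i] by (metis coprime_commute coprime_dvd_mult_right_iff)
        also have "\<dots> \<longleftrightarrow> Gik i * mk i dvd Gki i * z * mk i"
          using mkpos[OF that] by simp
        also have "Gik i * mk i = P i" by (rule Gik_eq)
        also have "Gki i * z * mk i = P k * z" using Gki_eq[of i] by (simp add: algebra_simps)
        finally show ?thesis .
      qed
      then show ?thesis by auto
    qed
    also have "\<dots> \<longleftrightarrow> D dvd P k * (int y - n k)"
      unfolding D_def by (auto simp add: Lcm_dvd_iff)
    finally show ?thesis .
  qed
  have nk0: "0 \<le> n k" unfolding n_def using X0 Pk by (simp add: pos_imp_zdiv_nonneg_iff)
  have okn: "ok (nat (n k))" using ok_iff nk0 by simp
  define yL where "yL = (LEAST y. ok y)"
  have okL: "ok yL" unfolding yL_def using okn by (rule LeastI)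
  have leL: "yL \<le> nat (n k)" unfolding yL_def using okn by (rule Least_le)
  have yL: "int yL = n k"
  proof (rule ccontr)
    assume ne: "int yL \<noteq> n k"
    have dv: "D dvd P k * (n k - int yL)" using okL ok_iff
      by (metis dvd_minus_iff minus_diff_eq mult_minus_right)
    have pos: "0 < P k * (n k - int yL)" using ne leL nk0 Pk by simp
    have "P k * (n k - int yL) \<le> P k * n k" using Pk by simp
    also have "\<dots> \<le> X" unfolding n_def using Pk pos_mod_sign[OF Pk, of X] mult_div_mod_eq[of "P k" X] by linarith
    finally have "P k * (n k - int yL) < D" using XD D_def by simp
    with zdvd_imp_le[OF dv pos] show False by simp
  qed
  show ?thesis
  proof (intro exI conjI)
    show "algA P x m k = Some (\<lambda>i. if i = k then int yL else (int yL * Gki i - q i) div Gik i)"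
      unfolding alg yL_def using okn by auto
    show "\<forall>i<m. (if i = k then int yL else (int yL * Gki i - q i) div Gik i) = X div P i"
    proof (intro allI impI)
      fix i assume im: "i < m"
      show "(if i = k then int yL else (int yL * Gki i - q i) div Gik i) = X div P i"
      proof (cases "i = k")
        case True then show ?thesis using yL n_def by simp
      next
        case False
        have "int yL * Gki i - q i = n i * Gik i" using yL q_eq[OF im False] by simp
        then show ?thesis using Gikpos[OF im] n_def False by simp
      qed
    qed
  qed
qed


lemma rnd_int_add: "rnd (real_of_int c + t) = c + rnd t"
  unfolding rnd_def by (metis add.assoc add.commute floor_add_int)

lemma rnd_int: "rnd (real_of_int c) = c"
  unfolding rnd_def by linarith

lemma rnd_mono: "t \<le> u \<Longrightarrow> rnd t \<le> rnd u"
  unfolding rnd_def by (intro floor_mono) simp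

lemma div_combine:
  fixes N d Mm :: int
  assumes "0 < Mm" "Mm dvd d"
  shows "N div d * (d div Mm) + (N mod d) div Mm = (N - N mod Mm) div Mm"
proof -
  obtain c where c: "d = Mm * c" using assms(2) by auto
  have "N = (N mod d) + Mm * (c * (N div d))" using c mod_div_mult_eq[of N d] by (simp add: algebra_simps)
  then have "N div Mm = (N mod d + Mm * (c * (N div d))) div Mm" by simp
  also have "\<dots> = (N mod d) div Mm + c * (N div d)" using assms(1) by simp
  finally have "N div Mm = (N mod d) div Mm + c * (N div d)" .
  moreover have "d div Mm = c" using c assms(1) by simp
  moreover have "(N - N mod Mm) div Mm = N div Mm"
    using assms(1) by (simp add: minus_mod_eq_mult_div)
  ultimately show ?thesis by simp
qed

lemma mingcd_le:
  assumes "q < m" "q \<noteq> i"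
  shows "mingcd P m i \<le> gcd (P i) (P q)"
  unfolding mingcd_def using assms by (intro Min_le) auto

theorem corollary5:
  fixes s k :: nat and L ref :: "nat \<Rightarrow> nat" and M rt :: "nat \<Rightarrow> nat \<Rightarrow> int"
    and N :: int and tau :: "nat \<Rightarrow> real"
  assumes s2: "2 \<le> s"
    and L1: "\<forall>j<s. 1 \<le> L j"
    and Mpos: "\<forall>j<s. 0 < M j 0"
    and Mincr: "\<forall>j<s. \<forall>i. Suc i < L j \<longrightarrow> M j i < M j (Suc i)"
    and delta_distinct: "\<forall>j<s. \<forall>j'<s. j \<noteq> j' \<longrightarrow> delta M L j \<noteq> delta M L j'"
    and N0: "0 \<le> N"
    and Nlt: "N < Lcm (delta M L ` {..<s})"
    and ks: "k < s"
    and kmax: "mingcd (delta M L) s k = maxmingcd (delta M L) s"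
    and refok: "\<forall>j<s. 2 \<le> L j \<longrightarrow>
                   ref j < L j \<and> mingcd (M j) (L j) (ref j) = maxmingcd (M j) (L j)"
    and rt_range: "\<forall>j<s. \<forall>i<L j. 0 \<le> rt j i \<and> rt j i \<le> M j i - 1"
    and rt_err: "\<forall>j<s. \<forall>i<L j. real_of_int \<bar>rt j i - N mod M j i\<bar> \<le> tau j"
    and tau_k: "tau k < min (Gj L M k) (real_of_int (mingcd (delta M L) s k) / 4)"
    and tau_j: "\<forall>j<s. j \<noteq> k \<longrightarrow>
                 tau j < min (Gj L M j)
                   (real_of_int (gcd (delta M L j) (delta M L k)) / 2
                    - min (Gj L M k) (real_of_int (mingcd (delta M L) s k) / 4))"
  shows "\<exists>out. twostage s L M rt ref k = Some out \<and>
           (\<forall>j<s. \<forall>i<L j. out j i = (N - N mod M j i) div M j i)"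
proof -
  define d where "d = delta M L"
  have Mpos: "0 < M j i" if "j < s" "i < L j" for j i
    using that(2)
  proof (induction i)
    case 0 then show ?case using Mpos that(1) by auto
  next
    case (Suc i) then show ?case using Mincr that(1) by force
  qed
  have Mdvd: "M j i dvd d j" if "j < s" "i < L j" for j i
    unfolding d_def delta_def using that by simp
  have dpos: "0 < d j" if "j < s" for j
  proof -
    have "d j \<noteq> 0" unfolding d_def delta_def
    proof
      assume "Lcm (M j ` {..<L j}) = 0"
      then obtain i where "i < L j" "M j i = 0" by (auto simp: Lcm_0_iff)
      with Mpos[OF that] show False by fastforce
    qed
    moreover have "0 \<le> d j" unfolding d_def delta_def by simp
    ultimately show ?thesis by simp
  qed
  define X where "X = (\<lambda>j. N mod d j)"
  define st1 where "st1 = (\<lambda>j. if 2 \<le> L j then algA (M j) (rt j) (L j) (ref j) else Some (\<lambda>i. 0))"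
  have tau0: "0 \<le> tau j" if "j < s" for j
    using rt_err that L1 by force
  have st1_ok: "\<exists>Kj. st1 j = Some Kj \<and> (\<forall>i<L j. Kj i = X j div M j i)" if js: "j < s" for j
  proof (cases "2 \<le> L j")
    case True
    define e where "e = (\<lambda>i. rt j i - N mod M j i)"
    have rj: "ref j < L j" and rj2: "mingcd (M j) (L j) (ref j) = maxmingcd (M j) (L j)"
      using refok js True by auto
    have "\<exists>f. algA (M j) (rt j) (L j) (ref j) = Some f \<and> (\<forall>i<L j. f i = X j div M j i)"
    proof (rule algA_correct[where e = e])
      show "\<forall>i<L j. 0 < M j i" using Mpos js by auto
      show "0 \<le> X j" unfolding X_def using dpos[OF js] by simp
      show "X j < Lcm (M j ` {..<L j})" unfolding X_def using dpos[OF js]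
        by (simp add: d_def delta_def)
      show "\<forall>i<L j. rt j i = X j mod M j i + e i"
        unfolding X_def e_def using Mdvd[OF js] by (simp add: mod_mod_cancel)
      show "\<forall>i<L j. i \<noteq> ref j \<longrightarrow> 2 * \<bar>e i - e (ref j)\<bar> < gcd (M j (ref j)) (M j i)"
      proof (intro allI impI)
        fix i assume i: "i < L j" "i \<noteq> ref j"
        have "real_of_int \<bar>e i\<bar> \<le> tau j" "real_of_int \<bar>e (ref j)\<bar> \<le> tau j"
          using rt_err js i rj unfolding e_def by auto
        moreover have "tau j < real_of_int (maxmingcd (M j) (L j)) / 4"
          using tau_k tau_j js True unfolding Gj_def by (cases "j = k") auto
        moreover have "maxmingcd (M j) (L j) \<le> gcd (M j (ref j)) (M j i)"
          using rj2 mingcd_le[of i "L j" "ref j" "M j"] i by simp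
        then have "real_of_int (maxmingcd (M j) (L j)) \<le> real_of_int (gcd (M j (ref j)) (M j i))"
          by (simp only: of_int_le_iff)
        moreover have "\<bar>e i - e (ref j)\<bar> \<le> \<bar>e i\<bar> + \<bar>e (ref j)\<bar>" by (rule abs_triangle_ineq4)
        then have "real_of_int \<bar>e i - e (ref j)\<bar> \<le> real_of_int (\<bar>e i\<bar> + \<bar>e (ref j)\<bar>)"
          by (simp only: of_int_le_iff)
        moreover have "real_of_int (2 * \<bar>e i - e (ref j)\<bar>) = 2 * real_of_int \<bar>e i - e (ref j)\<bar>" by simp
        moreover have "real_of_int (\<bar>e i\<bar> + \<bar>e (ref j)\<bar>) = real_of_int \<bar>e i\<bar> + real_of_int \<bar>e (ref j)\<bar>" by simp
        ultimately have "real_of_int (2 * \<bar>e i - e (ref j)\<bar>) < real_of_int (gcd (M j (ref j)) (M j i))"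
          by linarith
        then show "2 * \<bar>e i - e (ref j)\<bar> < gcd (M j (ref j)) (M j i)" by linarith
      qed
    qed (rule rj)
    then show ?thesis unfolding st1_def using True by simp
  next
    case False
    then have L: "L j = 1" using L1 js by force
    have "d j = M j 0" proof -
      have "{..<L j} = {0::nat}" using L by auto
      then show ?thesis unfolding d_def delta_def using Mpos[OF js, of 0] L by simp
    qed
    then have "X j div M j 0 = 0" unfolding X_def using dpos[OF js]
      by (simp add: div_pos_pos_trivial)
    then show ?thesis unfolding st1_def using False L by simp
  qed
  have st1_some: "\<forall>j<s. st1 j \<noteq> None"
  proof (intro allI impI)
    fix j assume js: "j < s"
    obtain Kj where "st1 j = Some Kj" using st1_ok[OF js] by blast
    then show "st1 j \<noteq> None" by simp
  qed
  define K where "K = (\<lambda>j. the (st1 j))"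
  have K: "K j i = X j div M j i" if js: "j < s" and ii: "i < L j" for j i
  proof -
    obtain Kj where "st1 j = Some Kj" "\<forall>i<L j. Kj i = X j div M j i" using st1_ok[OF js] by blast
    then show ?thesis using ii unfolding K_def by simp
  qed
  define Nh where "Nh = (\<lambda>j. rnd ((\<Sum>i<L j. real_of_int (K j i * M j i + rt j i)) / real (L j)))"
  define E where "E = (\<lambda>j. Nh j - N mod d j)"
  have Ebound: "real_of_int \<bar>E j\<bar> \<le> tau j" if js: "j < s" for j
  proof -
    define e where "e = (\<lambda>i. rt j i - N mod M j i)"
    define F where "F = \<lfloor>tau j\<rfloor>"
    have eF: "\<bar>e i\<bar> \<le> F" if "i < L j" for i
      using rt_err js that unfolding e_def F_def by (simp add: le_floor_iff)
    have Lp: "0 < L j" using L1 js by force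
    have summ: "(\<Sum>i<L j. real_of_int (K j i * M j i + rt j i)) = real (L j) * real_of_int (X j) + real_of_int (\<Sum>i<L j. e i)"
    proof -
      have "(\<Sum>i<L j. real_of_int (K j i * M j i + rt j i)) = (\<Sum>i<L j. real_of_int (X j) + real_of_int (e i))"
      proof (rule sum.cong)
        fix i assume "i \<in> {..<L j}"
        then have i: "i < L j" by simp
        have "X j mod M j i = N mod M j i" unfolding X_def using Mdvd[OF js i] by (simp add: mod_mod_cancel)
        then have "K j i * M j i + rt j i = X j + e i" unfolding K[OF js i] e_def
          using div_mult_mod_eq[of "X j" "M j i"] by linarith
        then show "real_of_int (K j i * M j i + rt j i) = real_of_int (X j) + real_of_int (e i)" by simp
      qed simp
      then show ?thesis by (simp add: sum.distrib)
    qed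
    define t where "t = real_of_int (\<Sum>i<L j. e i) / real (L j)"
    have avg: "(\<Sum>i<L j. real_of_int (K j i * M j i + rt j i)) / real (L j) = real_of_int (X j) + t"
      unfolding summ t_def using Lp by (simp add: field_simps)
    have s1: "(\<Sum>i<L j. e i) \<le> int (L j) * F"
      using sum_bounded_above[of "{..<L j}" e F] eF by (simp add: abs_le_iff)
    have s2: "- (int (L j) * F) \<le> (\<Sum>i<L j. e i)"
      proof -
      have "-F \<le> e i" if "i < L j" for i using eF[OF that] by linarith
      then show ?thesis using sum_bounded_below[of "{..<L j}" "-F" e] by simp
    qed
    have s1': "real_of_int (\<Sum>i<L j. e i) \<le> real (L j) * real_of_int F"
    proof -
      have "real_of_int (\<Sum>i<L j. e i) \<le> real_of_int (int (L j) * F)" using s1 by (simp only: of_int_le_iff)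
      then show ?thesis by simp
    qed
    have s2': "- (real (L j) * real_of_int F) \<le> real_of_int (\<Sum>i<L j. e i)"
    proof -
      have "real_of_int (- (int (L j) * F)) \<le> real_of_int (\<Sum>i<L j. e i)" using s2 by (simp only: of_int_le_iff)
      then show ?thesis by simp
    qed
    have Lr: "0 < real (L j)" using Lp by simp
    have "t \<le> real_of_int F" unfolding t_def using s1' Lr by (simp add: pos_divide_le_eq mult.commute)
    moreover have "- real_of_int F \<le> t" unfolding t_def using s2' Lr by (simp add: pos_le_divide_eq mult.commute)
    ultimately have "rnd t \<le> F" "- F \<le> rnd t"
      using rnd_mono[of t "real_of_int F"] rnd_mono[of "- real_of_int F" t] rnd_int[of F] rnd_int[of "-F"] by simp_all
    moreover have "E j = rnd t" unfolding E_def Nh_def avg rnd_int_add X_def by simp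
    ultimately have "\<bar>E j\<bar> \<le> F" by simp
    then show ?thesis unfolding F_def by (meson of_int_floor_le order_trans of_int_le_iff)
  qed
  have "\<exists>l. algA d Nh s k = Some l \<and> (\<forall>j<s. l j = N div d j)"
  proof (rule algA_correct[where e = E])
    show "k < s" by (rule ks)
    show "\<forall>j<s. 0 < d j" using dpos by auto
    show "0 \<le> N" by (rule N0)
    show "N < Lcm (d ` {..<s})" using Nlt unfolding d_def .
    show "\<forall>j<s. Nh j = N mod d j + E j" unfolding E_def by simp
    show "\<forall>j<s. j \<noteq> k \<longrightarrow> 2 * \<bar>E j - E k\<bar> < gcd (d k) (d j)"
    proof (intro allI impI)
      fix j assume j: "j < s" "j \<noteq> k"
      define Gm where "Gm = min (Gj L M k) (real_of_int (mingcd (delta M L) s k) / 4)"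
      have a: "real_of_int \<bar>E j\<bar> \<le> tau j" "real_of_int \<bar>E k\<bar> \<le> tau k" using Ebound j ks by auto
      have b: "tau k < Gm" using tau_k unfolding Gm_def .
      have c: "tau j < real_of_int (gcd (d j) (d k)) / 2 - Gm" using tau_j j unfolding Gm_def d_def by auto
      have "\<bar>E j - E k\<bar> \<le> \<bar>E j\<bar> + \<bar>E k\<bar>" by (rule abs_triangle_ineq4)
      then have "real_of_int \<bar>E j - E k\<bar> \<le> real_of_int (\<bar>E j\<bar> + \<bar>E k\<bar>)"
        by (simp only: of_int_le_iff)
      moreover have "real_of_int (2 * \<bar>E j - E k\<bar>) = 2 * real_of_int \<bar>E j - E k\<bar>" by simp
      moreover have "real_of_int (\<bar>E j\<bar> + \<bar>E k\<bar>) = real_of_int \<bar>E j\<bar> + real_of_int \<bar>E k\<bar>" by simp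
      moreover have "gcd (d j) (d k) = gcd (d k) (d j)" by (rule gcd.commute)
      ultimately have "real_of_int (2 * \<bar>E j - E k\<bar>) < real_of_int (gcd (d k) (d j))"
        using a b c by linarith
      then show "2 * \<bar>E j - E k\<bar> < gcd (d k) (d j)" by linarith
    qed
  qed
  then obtain l where l: "algA d Nh s k = Some l" "\<forall>j<s. l j = N div d j" by blast
  have tw: "twostage s L M rt ref k = Some (\<lambda>j i. l j * (d j div M j i) + K j i)"
    using st1_some l(1) unfolding twostage_def Let_def st1_def K_def Nh_def d_def
    by simp
  show ?thesis
  proof (intro exI conjI allI impI)
    show "twostage s L M rt ref k = Some (\<lambda>j i. l j * (d j div M j i) + K j i)" by (rule tw)
    fix j i assume j: "j < s" and i: "i < L j"
    show "l j * (d j div M j i) + K j i = (N - N mod M j i) div M j i"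
      using l(2) j K[OF j i] div_combine[OF Mpos[OF j i] Mdvd[OF j i], of N] unfolding X_def by simp
  qed
qed
end
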